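(* Consider the gradient-descent approximate policy iteration sequence described in the context. Suppose that $\gamma>0$ is such that $\alpha_{GD,\gamma}<1$, that $m+H-1>\log(2\delta_{FV})/\log(1/\alpha)$ (with $\delta_{FV}<\infty$), and that $$\eta>\frac{\log\big(3\sqrt{|S|}\,\|\Phi\|_\infty/\sigma_{\min,\Phi}\big)}{\log(1/\alpha_{GD,\gamma})}.$$ Let $c:=\frac{\sqrt{|S|}\,\|\Phi\|_\infty}{\sigma_{\min,\Phi}}$ and define $$\beta:=\alpha^{m+H-1}\delta_{FV}+c\,\alpha_{GD,\gamma}^\eta(\alpha^{m+H-1}\delta_{FV}+1),$$ $$\tau:=(1+c\,\alpha_{GD,\gamma}^\eta)\Big(\frac{\alpha^m+\alpha^{m+H-1}}{1-\alpha}\delta_{FV}+\delta_{app}+\delta_{FV}\epsilon_{PE}\Big)+\frac{c\,\alpha_{GD,\gamma}^\eta}{1-\alpha}.$$ Then $\beta<1$ and for every $k\ge1$, $$\|J^{\mu_k}-J^*\|_\infty\le\frac{\alpha^{kH}}{1-\alpha}+\frac{2\alpha^H\|J^{\mu_0}-J_0\|_\infty}{1-\alpha}\,k\,\max(\alpha^H,\beta)^{k-1}+\frac{2\alpha^H\frac{\tau}{1-\beta}+\epsilon_{LA}}{(1-\alpha^H)(1-\alpha)}.$$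
   Context: Consider a Markov decision process with finite state space $S$ (with $|S|$ states), finite action space $A$, transition probabilities $P_{ij}(a)$, rewards $r(s,a)\in[0,1]$, and discount factor $\alpha\in(0,1)$. A (deterministic stationary) policy is a map $\mu:S\to A$; its value is $J^\mu(s)=E[\sum_{t\ge0}\alpha^t r(s_t,\mu(s_t))\mid s_0=s]$, and $J^*(s)=\max_\mu J^\mu(s)$. For a policy $\mu$, $(T_\mu J)(s)=r(s,\mu(s))+\alpha\sum_j P_{sj}(\mu(s))J(j)$; the Bellman operator is $(TJ)(s)=\max_{a\in A}\{r(s,a)+\alpha\sum_j P_{sj}(a)J(j)\}$; powers denote repeated application. $\|\cdot\|_\infty$ denotes the max norm and the induced matrix norm; $\|\cdot\|_2$ the Euclidean norm. Gradient-descent approximate policy iteration: fix integers $m\ge1$, $H\ge1$, $\eta\ge1$, a step size $\gamma>0$, constants $\epsilon_{LA},\epsilon_{PE}\ge0$, a feature matrix $\Phi\in\mathbb{R}^{|S|\times d}$ whose row $i$ is $\phi(i)^\top$, and subsets $D_k\subseteq S$ ($k\ge0$) such that $\{\phi(i)\}_{i\in D_k}$ has rank $d$. Let $\Phi_{D_k}$ be the submatrix of $\Phi$ with rows indexed by $D_k$, $P_k\in\{0,1\}^{|D_k|\times|S|}$ the matrix selecting the coordinates in $D_k$, and $\mathcal{M}_{k+1}:=\Phi(\Phi_{D_k}^\top\Phi_{D_k})^{-1}\Phi_{D_k}^\top P_k$. Start with $\theta_0\in\mathbb{R}^d$, $J_0=\Phi\theta_0$, and an arbitrary policy $\mu_0$.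 For each $k\ge0$: $\mu_{k+1}$ is any policy with $\|T^HJ_k-T_{\mu_{k+1}}T^{H-1}J_k\|_\infty\le\epsilon_{LA}$; $w_{k+1}\in\mathbb{R}^{|S|}$ satisfies $w_{k+1}(i)=0$ for $i\notin D_k$ and $\|w_{k+1}\|_\infty\le\epsilon_{PE}$; $\hat J_{k+1}:=T^m_{\mu_{k+1}}T^{H-1}J_k+w_{k+1}$; set $\theta_{k+1,0}=\theta_k$ and for $\ell=1,\dots,\eta$, $\theta_{k+1,\ell}=\theta_{k+1,\ell-1}-\gamma\big(\Phi_{D_k}^\top\Phi_{D_k}\theta_{k+1,\ell-1}-\Phi_{D_k}^\top P_k\hat J_{k+1}\big)$ (gradient descent on $\frac12\sum_{i\in D_k}((\Phi\theta)(i)-\hat J_{k+1}(i))^2$); then $\theta_{k+1}=\theta_{k+1,\eta}$ and $J_{k+1}=\Phi\theta_{k+1}$. Define $\delta_{FV}:=\sup_{k\ge1}\|\mathcal{M}_k\|_\infty$, $\delta_{app}:=\sup_{k\ge1}\sup_\mu\|\mathcal{M}_kJ^\mu-J^\mu\|_\infty$ (inner supremum over all policies), $\alpha_{GD,\gamma}:=\sup_{k\ge0}\max_i|1-\gamma\lambda_i(\Phi_{D_k}^\top\Phi_{D_k})|$ where $\lambda_i$ is the $i$-th eigenvalue, and $\sigma_{\min,\Phi}$ the smallest singular value of $\Phi$. *)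

theory Defs
  imports "HOL-Analysis.Analysis"
begin

text \<open>States: finite type 's; actions: finite type 'a; features: finite type 'd.
  Transition probabilities: P a $ i $ j = P_ij(a).  Rewards: r s a.\<close>

definition supnorm :: "real ^ 'n::finite \<Rightarrow> real" where
  "supnorm v = (MAX i. \<bar>v $ i\<bar>)"

definition matnorm_inf :: "real ^ 'n::finite ^ 'm::finite \<Rightarrow> real" where
  "matnorm_inf A = (MAX i. (\<Sum>j\<in>UNIV. \<bar>A $ i $ j\<bar>))"

definition eigenvalues :: "real ^ 'n::finite ^ 'n \<Rightarrow> real set" where
  "eigenvalues A = {l. \<exists>v. v \<noteq> 0 \<and> A *v v = l *\<^sub>R v}"

definition sigma_min :: "real ^ 'd::finite ^ 's::finite \<Rightarrow> real" where
  "sigma_min Phi = sqrt (Min (eigenvalues (transpose Phi ** Phi)))"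

definition is_mdp :: "('a::finite \<Rightarrow> real ^ 's::finite ^ 's) \<Rightarrow> ('s \<Rightarrow> 'a \<Rightarrow> real) \<Rightarrow> real \<Rightarrow> bool" where
  "is_mdp P r \<alpha> \<longleftrightarrow> (\<forall>a i j. P a $ i $ j \<ge> 0) \<and> (\<forall>a i. (\<Sum>j\<in>UNIV. P a $ i $ j) = 1)
     \<and> (\<forall>s a. 0 \<le> r s a \<and> r s a \<le> 1) \<and> 0 < \<alpha> \<and> \<alpha> < 1"

definition Ppol :: "('a \<Rightarrow> real ^ 's::finite ^ 's) \<Rightarrow> ('s \<Rightarrow> 'a) \<Rightarrow> real ^ 's ^ 's" where
  "Ppol P mu = (\<chi> i j. P (mu i) $ i $ j)"

definition rpol :: "('s::finite \<Rightarrow> 'a \<Rightarrow> real) \<Rightarrow> ('s \<Rightarrow> 'a) \<Rightarrow> real ^ 's" where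
  "rpol r mu = (\<chi> i. r i (mu i))"

text \<open>J^mu(s) = E[sum_t alpha^t r(s_t, mu(s_t)) | s_0 = s] = sum_t alpha^t ((P_mu)^t r_mu)(s).\<close>
definition Jpol :: "('a \<Rightarrow> real ^ 's::finite ^ 's) \<Rightarrow> ('s \<Rightarrow> 'a \<Rightarrow> real) \<Rightarrow> real \<Rightarrow> ('s \<Rightarrow> 'a) \<Rightarrow> real ^ 's" where
  "Jpol P r \<alpha> mu = (\<chi> s. (\<Sum>t. \<alpha> ^ t * ((((*v) (Ppol P mu)) ^^ t) (rpol r mu)) $ s))"

definition Jstar :: "('a::finite \<Rightarrow> real ^ 's::finite ^ 's) \<Rightarrow> ('s \<Rightarrow> 'a \<Rightarrow> real) \<Rightarrow> real \<Rightarrow> real ^ 's" where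
  "Jstar P r \<alpha> = (\<chi> s. Max {Jpol P r \<alpha> mu $ s | mu. True})"

definition Tpol :: "('a \<Rightarrow> real ^ 's::finite ^ 's) \<Rightarrow> ('s \<Rightarrow> 'a \<Rightarrow> real) \<Rightarrow> real \<Rightarrow> ('s \<Rightarrow> 'a) \<Rightarrow> real ^ 's \<Rightarrow> real ^ 's" where
  "Tpol P r \<alpha> mu J = (\<chi> s. r s (mu s) + \<alpha> * (\<Sum>j\<in>UNIV. P (mu s) $ s $ j * J $ j))"

definition Tbell :: "('a::finite \<Rightarrow> real ^ 's::finite ^ 's) \<Rightarrow> ('s \<Rightarrow> 'a \<Rightarrow> real) \<Rightarrow> real \<Rightarrow> real ^ 's \<Rightarrow> real ^ 's" where
  "Tbell P r \<alpha> J = (\<chi> s. MAX a. r s a + \<alpha> * (\<Sum>j\<in>UNIV. P a $ s $ j * J $ j))"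

text \<open>Feature vector phi(i) = row i of Phi.  Phi_D^T Phi_D and Phi_D^T P_D written out.\<close>
definition gram :: "'s set \<Rightarrow> real ^ 'd::finite ^ 's::finite \<Rightarrow> real ^ 'd ^ 'd" where
  "gram D Phi = (\<chi> a b. \<Sum>i\<in>D. Phi $ i $ a * Phi $ i $ b)"

definition restrT :: "'s set \<Rightarrow> real ^ 'd::finite ^ 's::finite \<Rightarrow> real ^ 's ^ 'd" where
  "restrT D Phi = (\<chi> a j. if j \<in> D then Phi $ j $ a else 0)"

definition Mproj :: "'s set \<Rightarrow> real ^ 'd::finite ^ 's::finite \<Rightarrow> real ^ 's ^ 's" where
  "Mproj D Phi = Phi ** matrix_inv (gram D Phi) ** restrT D Phi"

text \<open>One gradient step on 1/2 sum_{i in D} ((Phi theta)(i) - Jhat(i))^2.\<close>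
definition gd_step :: "real \<Rightarrow> 's set \<Rightarrow> real ^ 'd::finite ^ 's::finite \<Rightarrow> real ^ 's \<Rightarrow> real ^ 'd \<Rightarrow> real ^ 'd" where
  "gd_step \<gamma> D Phi Jh \<theta> = \<theta> - \<gamma> *\<^sub>R (gram D Phi *v \<theta> - restrT D Phi *v Jh)"

end

theory Submission
  imports Defs
begin


lemma supnorm_ge: "\<bar>v $ i\<bar> \<le> supnorm v"
  unfolding supnorm_def by (rule Max_ge) auto

lemma supnorm_le: "(\<And>i. \<bar>v $ i\<bar> \<le> c) \<Longrightarrow> supnorm v \<le> c"
  unfolding supnorm_def by (subst Max_le_iff) auto

lemma supnorm_nonneg: "0 \<le> supnorm v"
  using supnorm_ge[of v] abs_ge_zero order_trans by blast

lemma supnorm_commute: "supnorm (a - b) = supnorm (b - a)"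
proof -
  have "\<And>i. \<bar>(a - b) $ i\<bar> = \<bar>(b - a) $ i\<bar>" by simp
  then show ?thesis unfolding supnorm_def by simp
qed

lemma supnorm_triangle: "supnorm (a + b) \<le> supnorm a + supnorm b"
  by (rule supnorm_le) (metis abs_triangle_ineq add_mono order_trans supnorm_ge vector_add_component)

lemma supnorm_le_norm: "supnorm (v::real^'n::finite) \<le> norm v"
  by (rule supnorm_le) (rule component_le_norm_cart)

lemma norm_le_supnorm: "norm (v::real^'n::finite) \<le> sqrt (real CARD('n)) * supnorm v"
proof -
  have "norm v = sqrt (\<Sum>i\<in>UNIV. (v$i)^2)" by (simp add: norm_vec_def L2_set_def)
  also have "\<dots> \<le> sqrt (\<Sum>i\<in>(UNIV::'n set). (supnorm v)^2)"
  proof (rule real_sqrt_le_mono, rule sum_mono)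
    fix i show "(v$i)^2 \<le> (supnorm v)^2"
      using supnorm_ge[of v i] by (metis abs_ge_zero power2_abs power_mono)
  qed
  also have "\<dots> = sqrt (real CARD('n)) * supnorm v"
    using supnorm_nonneg[of v] by (simp add: real_sqrt_mult)
  finally show ?thesis .
qed

lemma matnorm_nonneg: "0 \<le> matnorm_inf A"
proof -
  have "0 \<le> (\<Sum>j\<in>UNIV. \<bar>A $ i $ j\<bar>)" for i by (simp add: sum_nonneg)
  moreover have "(\<Sum>j\<in>UNIV. \<bar>A $ i $ j\<bar>) \<le> matnorm_inf A" for i
    unfolding matnorm_inf_def by (rule Max_ge) auto
  ultimately show ?thesis by (meson order_trans)
qed

lemma matnorm_bound: "supnorm (A *v x) \<le> matnorm_inf A * supnorm x"
proof (rule supnorm_le)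
  fix i
  have "\<bar>(A *v x) $ i\<bar> = \<bar>\<Sum>j\<in>UNIV. A $ i $ j * x $ j\<bar>" by (simp add: matrix_vector_mult_def)
  also have "\<dots> \<le> (\<Sum>j\<in>UNIV. \<bar>A $ i $ j\<bar> * supnorm x)"
    by (rule order_trans[OF sum_abs], rule sum_mono)
       (simp add: abs_mult mult_left_mono supnorm_ge)
  also have "\<dots> = (\<Sum>j\<in>UNIV. \<bar>A $ i $ j\<bar>) * supnorm x" by (simp add: sum_distrib_right)
  also have "\<dots> \<le> matnorm_inf A * supnorm x"
    by (rule mult_right_mono[OF _ supnorm_nonneg]) (unfold matnorm_inf_def, rule Max_ge, auto)
  finally show "\<bar>(A *v x) $ i\<bar> \<le> matnorm_inf A * supnorm x" .
qed

lemma iter_shift: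
  fixes F :: "real^'n::finite \<Rightarrow> real^'n"
  assumes F: "\<And>J V c. (\<forall>s. J$s \<le> V$s + c) \<Longrightarrow> (\<forall>s. F J $ s \<le> F V $ s + (\<alpha>::real) * c)"
    and h: "\<forall>s. J$s \<le> V$s + c"
  shows "\<forall>s. (F^^n) J $ s \<le> (F^^n) V $ s + \<alpha>^n * c"
proof (induction n)
  case 0 then show ?case using h by simp
next
  case (Suc n)
  from F[OF Suc] show ?case by (simp add: mult.assoc)
qed

lemma iter_contr:
  fixes F :: "real^'n::finite \<Rightarrow> real^'n"
  assumes F: "\<And>J V c. (\<forall>s. J$s \<le> V$s + c) \<Longrightarrow> (\<forall>s. F J $ s \<le> F V $ s + (\<alpha>::real) * c)"
    and a: "0 \<le> \<alpha>"
  shows "supnorm ((F^^n) J - (F^^n) V) \<le> \<alpha>^n * supnorm (J - V)"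
proof (rule supnorm_le)
  fix i
  have h1: "\<forall>s. J$s \<le> V$s + supnorm (J - V)"
  proof fix s show "J$s \<le> V$s + supnorm (J - V)" using supnorm_ge[of "J - V" s] by (auto simp: abs_le_iff) qed
  have h2: "\<forall>s. V$s \<le> J$s + supnorm (J - V)"
  proof fix s show "V$s \<le> J$s + supnorm (J - V)" using supnorm_ge[of "J - V" s] by (auto simp: abs_le_iff) qed
  show "\<bar>((F^^n) J - (F^^n) V) $ i\<bar> \<le> \<alpha>^n * supnorm (J - V)"
    using iter_shift[where F=F and \<alpha>=\<alpha> and n=n, OF F h1, rule_format, of i] iter_shift[where F=F and \<alpha>=\<alpha> and n=n, OF F h2, rule_format, of i] by (auto simp: abs_le_iff)
qed

locale mdpc =
  fixes P :: "'a::finite \<Rightarrow> real ^ 's::finite ^ 's" and r :: "'s \<Rightarrow> 'a \<Rightarrow> real" and \<alpha> :: real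
  assumes mdp: "is_mdp P r \<alpha>"
begin

lemma Pnn: "P a $ i $ j \<ge> 0" using mdp unfolding is_mdp_def by blast
lemma Psum: "(\<Sum>j\<in>UNIV. P a $ i $ j) = 1" using mdp unfolding is_mdp_def by blast
lemma rnn: "0 \<le> r s a" using mdp unfolding is_mdp_def by blast
lemma rle: "r s a \<le> 1" using mdp unfolding is_mdp_def by blast
lemma apos: "0 < \<alpha>" using mdp unfolding is_mdp_def by blast
lemma alt1: "\<alpha> < 1" using mdp unfolding is_mdp_def by blast

lemma Psum_shift:
  assumes "\<forall>s. J$s \<le> V$s + c"
  shows "(\<Sum>j\<in>UNIV. P a $ i $ j * J $ j) \<le> (\<Sum>j\<in>UNIV. P a $ i $ j * V $ j) + c"
proof -
  have "(\<Sum>j\<in>UNIV. P a $ i $ j * J $ j) \<le> (\<Sum>j\<in>UNIV. P a $ i $ j * (V $ j + c))"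
    by (rule sum_mono) (simp add: assms Pnn mult_left_mono)
  also have "\<dots> = (\<Sum>j\<in>UNIV. P a $ i $ j * V $ j + c * P a $ i $ j)"
    by (rule sum.cong) (simp_all add: algebra_simps)
  also have "\<dots> = (\<Sum>j\<in>UNIV. P a $ i $ j * V $ j) + c * (\<Sum>j\<in>UNIV. P a $ i $ j)"
    by (simp add: sum.distrib sum_distrib_left)
  finally show ?thesis by (simp add: Psum)
qed

lemma Psum_lower:
  assumes "\<forall>s. m \<le> J$s"
  shows "m \<le> (\<Sum>j\<in>UNIV. P a $ i $ j * J $ j)"
proof -
  have "(\<Sum>j\<in>UNIV. P a $ i $ j * m) \<le> (\<Sum>j\<in>UNIV. P a $ i $ j * J $ j)"
    by (rule sum_mono) (simp add: assms Pnn mult_left_mono)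
  then show ?thesis by (simp add: sum_distrib_right[symmetric] Psum)
qed

lemma Psum_upper:
  assumes "\<forall>s. J$s \<le> m"
  shows "(\<Sum>j\<in>UNIV. P a $ i $ j * J $ j) \<le> m"
proof -
  have "(\<Sum>j\<in>UNIV. P a $ i $ j * J $ j) \<le> (\<Sum>j\<in>UNIV. P a $ i $ j * m)"
    by (rule sum_mono) (simp add: assms Pnn mult_left_mono)
  then show ?thesis by (simp add: sum_distrib_right[symmetric] Psum)
qed

lemma Tpol_shift:
  "(\<forall>s. J$s \<le> V$s + c) \<Longrightarrow> (\<forall>s. Tpol P r \<alpha> mu J $ s \<le> Tpol P r \<alpha> mu V $ s + \<alpha> * c)"
  unfolding Tpol_def using Psum_shift apos
  by (auto simp: distrib_left[symmetric] intro!: mult_left_mono)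

lemma Tbell_shift:
  "(\<forall>s. J$s \<le> V$s + c) \<Longrightarrow> (\<forall>s. Tbell P r \<alpha> J $ s \<le> Tbell P r \<alpha> V $ s + \<alpha> * c)"
proof (intro allI)
  fix s assume h: "\<forall>s. J$s \<le> V$s + c"
  have "(MAX a. r s a + \<alpha> * (\<Sum>j\<in>UNIV. P a $ s $ j * J $ j))
     \<le> (MAX a. r s a + \<alpha> * (\<Sum>j\<in>UNIV. P a $ s $ j * V $ j)) + \<alpha> * c"
  proof (subst Max_le_iff, simp, simp, clarsimp)
    fix a
    have "r s a + \<alpha> * (\<Sum>j\<in>UNIV. P a $ s $ j * J $ j) \<le> r s a + \<alpha> * (\<Sum>j\<in>UNIV. P a $ s $ j * V $ j) + \<alpha> * c"
      using Psum_shift[OF h, of a s] apos by (simp add: distrib_left[symmetric] mult_left_mono)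
    also have "\<dots> \<le> (MAX a. r s a + \<alpha> * (\<Sum>j\<in>UNIV. P a $ s $ j * V $ j)) + \<alpha> * c"
      by (simp add: Max_ge)
    finally show "r s a + \<alpha> * (\<Sum>j\<in>UNIV. P a $ s $ j * J $ j) \<le> (MAX a. r s a + \<alpha> * (\<Sum>j\<in>UNIV. P a $ s $ j * V $ j)) + \<alpha> * c" .
  qed
  then show "Tbell P r \<alpha> J $ s \<le> Tbell P r \<alpha> V $ s + \<alpha> * c" unfolding Tbell_def by simp
qed

lemma Tpol_le_Tbell: "Tpol P r \<alpha> mu J $ s \<le> Tbell P r \<alpha> J $ s"
  unfolding Tpol_def Tbell_def by (simp add: Max_ge)

lemma Tpol_iter_le: "((Tpol P r \<alpha> mu)^^n) J $ s \<le> ((Tbell P r \<alpha>)^^n) J $ s"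
proof (induction n arbitrary: s)
  case 0 then show ?case by simp
next
  case (Suc n)
  have "\<forall>s. ((Tpol P r \<alpha> mu)^^n) J $ s \<le> ((Tbell P r \<alpha>)^^n) J $ s + 0" using Suc by simp
  from Tpol_shift[OF this] have "Tpol P r \<alpha> mu (((Tpol P r \<alpha> mu)^^n) J) $ s \<le> Tpol P r \<alpha> mu (((Tbell P r \<alpha>)^^n) J) $ s" by simp
  also have "\<dots> \<le> Tbell P r \<alpha> (((Tbell P r \<alpha>)^^n) J) $ s" by (rule Tpol_le_Tbell)
  finally show ?case by simp
qed

lemma Tbell_box:
  assumes "\<forall>s. 0 \<le> J$s \<and> J$s \<le> 1/(1-\<alpha>)"
  shows "\<forall>s. 0 \<le> Tbell P r \<alpha> J $ s \<and> Tbell P r \<alpha> J $ s \<le> 1/(1-\<alpha>)"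
proof
  fix s
  have lo: "0 \<le> (\<Sum>j\<in>UNIV. P a $ s $ j * J $ j)" for a using Psum_lower[of 0 J] assms by auto
  have hi: "(\<Sum>j\<in>UNIV. P a $ s $ j * J $ j) \<le> 1/(1-\<alpha>)" for a using Psum_upper[of J] assms by auto
  have e: "1 + \<alpha> * (1/(1-\<alpha>)) = 1/(1-\<alpha>)" using alt1 by (simp add: field_simps)
  have t: "0 \<le> r s a + \<alpha> * (\<Sum>j\<in>UNIV. P a $ s $ j * J $ j) \<and> r s a + \<alpha> * (\<Sum>j\<in>UNIV. P a $ s $ j * J $ j) \<le> 1/(1-\<alpha>)" for a
  proof
    show "0 \<le> r s a + \<alpha> * (\<Sum>j\<in>UNIV. P a $ s $ j * J $ j)" using lo[of a] rnn[of s a] apos by simp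
    have "\<alpha> * (\<Sum>j\<in>UNIV. P a $ s $ j * J $ j) \<le> \<alpha> * (1/(1-\<alpha>))" using mult_left_mono[OF hi[of a], of \<alpha>] apos by simp
    then show "r s a + \<alpha> * (\<Sum>j\<in>UNIV. P a $ s $ j * J $ j) \<le> 1/(1-\<alpha>)" using rle[of s a] e by linarith
  qed
  define f where "f a = r s a + \<alpha> * (\<Sum>j\<in>UNIV. P a $ s $ j * J $ j)" for a
  obtain a0 :: 'a where True by blast
  have "f a0 \<le> Max (range f)" by (rule Max_ge) auto
  then have "0 \<le> Max (range f)" using t[of a0] unfolding f_def by linarith
  moreover have "Max (range f) \<le> 1/(1-\<alpha>)" using t by (subst Max_le_iff) (auto simp: f_def)
  ultimately show "0 \<le> Tbell P r \<alpha> J $ s \<and> Tbell P r \<alpha> J $ s \<le> 1/(1-\<alpha>)"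
    unfolding Tbell_def f_def by simp
qed

lemma Tbell_iter_box:
  assumes "\<forall>s. 0 \<le> J$s \<and> J$s \<le> 1/(1-\<alpha>)"
  shows "\<forall>s. 0 \<le> ((Tbell P r \<alpha>)^^n) J $ s \<and> ((Tbell P r \<alpha>)^^n) J $ s \<le> 1/(1-\<alpha>)"
  by (induction n) (use assms Tbell_box in auto)

end



context mdpc begin

definition vv :: "('s \<Rightarrow> 'a) \<Rightarrow> nat \<Rightarrow> real^'s" where
  "vv mu t = (((*v) (Ppol P mu)) ^^ t) (rpol r mu)"

lemma Ppol_apply: "(Ppol P mu *v y) $ s = (\<Sum>j\<in>UNIV. P (mu s) $ s $ j * y $ j)"
  by (simp add: matrix_vector_mult_def Ppol_def)

lemma vv_Suc: "vv mu (Suc t) = Ppol P mu *v vv mu t"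
  by (simp add: vv_def)

lemma vv_box: "0 \<le> vv mu t $ s \<and> vv mu t $ s \<le> 1"
proof (induction t arbitrary: s)
  case 0 then show ?case by (simp add: vv_def rpol_def rnn rle)
next
  case (Suc t)
  show ?case unfolding vv_Suc Ppol_apply
    using Psum_lower[of 0 "vv mu t"] Psum_upper[of "vv mu t" 1] Suc by auto
qed

lemma vv_summable: "summable (\<lambda>t. \<alpha>^t * vv mu t $ s)"
proof (rule summable_comparison_test'[where g="\<lambda>t. \<alpha>^t"])
  show "summable (\<lambda>t. \<alpha>^t)" using apos alt1 by (simp add: summable_geometric)
  fix n show "norm (\<alpha>^n * vv mu n $ s) \<le> \<alpha>^n"
    using vv_box[of mu n s] apos by (simp add: abs_mult mult_left_le)
qed

lemma Jpol_eq: "Jpol P r \<alpha> mu $ s = (\<Sum>t. \<alpha>^t * vv mu t $ s)"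
  by (simp add: Jpol_def vv_def)

lemma Jpol_box: "0 \<le> Jpol P r \<alpha> mu $ s \<and> Jpol P r \<alpha> mu $ s \<le> 1/(1-\<alpha>)"
proof
  show "0 \<le> Jpol P r \<alpha> mu $ s" unfolding Jpol_eq
    by (rule suminf_nonneg[OF vv_summable]) (use vv_box apos in simp)
  have "(\<Sum>t. \<alpha>^t * vv mu t $ s) \<le> (\<Sum>t. \<alpha>^t)"
    by (rule suminf_le) (use vv_box apos alt1 vv_summable in \<open>auto simp: mult_left_le summable_geometric\<close>)
  then show "Jpol P r \<alpha> mu $ s \<le> 1/(1-\<alpha>)" unfolding Jpol_eq using apos alt1 by (simp add: suminf_geometric)
qed

lemma Jpol_fix: "Tpol P r \<alpha> mu (Jpol P r \<alpha> mu) = Jpol P r \<alpha> mu"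
proof (subst vec_eq_iff, rule allI)
  fix s
  have sm: "summable (\<lambda>t. \<alpha>^t * vv mu t $ j)" for j by (rule vv_summable)
  have "(\<Sum>j\<in>UNIV. P (mu s) $ s $ j * Jpol P r \<alpha> mu $ j)
      = (\<Sum>j\<in>UNIV. (\<Sum>t. P (mu s) $ s $ j * (\<alpha>^t * vv mu t $ j)))"
    unfolding Jpol_eq by (rule sum.cong) (simp_all add: suminf_mult[OF sm])
  also have "\<dots> = (\<Sum>t. (\<Sum>j\<in>UNIV. P (mu s) $ s $ j * (\<alpha>^t * vv mu t $ j)))"
    by (rule suminf_sum[symmetric]) (intro summable_mult sm)
  also have "\<dots> = (\<Sum>t. \<alpha>^t * vv mu (Suc t) $ s)"
    unfolding vv_Suc Ppol_apply
    by (rule arg_cong[where f=suminf], rule ext) (simp add: sum_distrib_left algebra_simps)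
  finally have e1: "(\<Sum>j\<in>UNIV. P (mu s) $ s $ j * Jpol P r \<alpha> mu $ j) = (\<Sum>t. \<alpha>^t * vv mu (Suc t) $ s)" .
  have "Jpol P r \<alpha> mu $ s = (\<Sum>t. \<alpha>^(Suc t) * vv mu (Suc t) $ s) + \<alpha>^0 * vv mu 0 $ s"
    unfolding Jpol_eq using suminf_split_head[OF vv_summable, of mu s] by simp
  also have "(\<Sum>t. \<alpha>^(Suc t) * vv mu (Suc t) $ s) = \<alpha> * (\<Sum>t. \<alpha>^t * vv mu (Suc t) $ s)"
  proof -
    have "summable (\<lambda>t. \<alpha>^t * vv mu (Suc t) $ s)"
    proof (rule summable_comparison_test'[where g="\<lambda>t. \<alpha>^t"])
      show "summable (\<lambda>t. \<alpha>^t)" using apos alt1 by (simp add: summable_geometric)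
      fix n show "norm (\<alpha>^n * vv mu (Suc n) $ s) \<le> \<alpha>^n"
        using vv_box[of mu "Suc n" s] apos by (simp add: abs_mult mult_left_le)
    qed
    then show ?thesis by (simp add: suminf_mult[symmetric] mult.assoc)
  qed
  finally show "Tpol P r \<alpha> mu (Jpol P r \<alpha> mu) $ s = Jpol P r \<alpha> mu $ s"
    unfolding Tpol_def using e1 by (simp add: vv_def rpol_def)
qed

lemma Jpol_fix_iter: "(Tpol P r \<alpha> mu ^^ n) (Jpol P r \<alpha> mu) = Jpol P r \<alpha> mu"
  by (induction n) (simp_all add: Jpol_fix)

lemma Jset_eq: "{Jpol P r \<alpha> mu $ s | mu. True} = range (\<lambda>mu. Jpol P r \<alpha> mu $ s)" by auto

lemma Jstar_ge: "Jpol P r \<alpha> mu $ s \<le> Jstar P r \<alpha> $ s"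
  unfolding Jstar_def Jset_eq vec_lambda_beta by (rule Max_ge) auto

lemma Jstar_attained: "\<exists>nu. Jstar P r \<alpha> $ s = Jpol P r \<alpha> nu $ s"
proof -
  have "Max {Jpol P r \<alpha> mu $ s | mu. True} \<in> {Jpol P r \<alpha> mu $ s | mu. True}"
    unfolding Jset_eq by (rule Max_in) auto
  then show ?thesis unfolding Jstar_def by auto
qed

lemma Jstar_box: "0 \<le> Jstar P r \<alpha> $ s \<and> Jstar P r \<alpha> $ s \<le> 1/(1-\<alpha>)"
  using Jstar_attained[of s] Jpol_box by metis

lemma improve:
  assumes H: "H \<ge> 1"
    and gr: "supnorm ((Tbell P r \<alpha> ^^ H) J - Tpol P r \<alpha> mu' ((Tbell P r \<alpha> ^^ (H - 1)) J)) \<le> \<epsilon>"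
  shows "supnorm (Jpol P r \<alpha> mu' - Jstar P r \<alpha>)
     \<le> \<alpha>^H * supnorm (Jpol P r \<alpha> mu - Jstar P r \<alpha>) + (\<epsilon> + 2 * \<alpha>^H * supnorm (J - Jpol P r \<alpha> mu)) / (1 - \<alpha>)"
proof -
  define T where "T = Tbell P r \<alpha>"
  define Tm where "Tm = Tpol P r \<alpha>"
  define V where "V = Jpol P r \<alpha> mu"
  define e where "e = supnorm (J - V)"
  define a where "a = supnorm (V - Jstar P r \<alpha>)"
  define J' where "J' = (T ^^ (H - 1)) V"
  define \<delta> where "\<delta> = \<epsilon> + 2 * \<alpha>^H * e"
  have HH: "H = Suc (H - 1)" using H by simp
  have aH: "\<alpha> * \<alpha>^(H-1) = \<alpha>^H" by (subst (2) HH) simp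
  have TH: "(T ^^ H) X = T ((T ^^ (H - 1)) X)" for X by (subst HH) simp
  have TS: "T \<equiv> Tbell P r \<alpha>" "Tm \<equiv> Tpol P r \<alpha>" by (simp_all add: T_def Tm_def)
  have JV: "\<forall>s. J$s \<le> V$s + e"
  proof fix s show "J$s \<le> V$s + e" using supnorm_ge[of "J - V" s] unfolding e_def by (auto simp: abs_le_iff) qed
  have VJ: "\<forall>s. V$s \<le> J$s + e"
  proof fix s show "V$s \<le> J$s + e" using supnorm_ge[of "J - V" s] unfolding e_def by (auto simp: abs_le_iff) qed
  have s1: "\<forall>s. (T^^(H-1)) J $ s \<le> J' $ s + \<alpha>^(H-1) * e"
    unfolding J'_def T_def by (rule iter_shift[OF Tbell_shift JV])
  have s2: "\<forall>s. Tm mu' ((T^^(H-1)) J) $ s \<le> Tm mu' J' $ s + \<alpha>^H * e"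
    using Tpol_shift[OF s1] aH unfolding Tm_def by (simp add: mult.assoc[symmetric])
  have s3: "\<forall>s. (T^^H) V $ s \<le> (T^^H) J $ s + \<alpha>^H * e"
    unfolding T_def by (rule iter_shift[OF Tbell_shift VJ])
  have s4: "\<forall>s. (T^^H) J $ s \<le> Tm mu' ((T^^(H-1)) J) $ s + \<epsilon>"
  proof
    fix s show "(T^^H) J $ s \<le> Tm mu' ((T^^(H-1)) J) $ s + \<epsilon>"
      using supnorm_ge[of "(T ^^ H) J - Tm mu' ((T ^^ (H - 1)) J)" s] gr unfolding T_def Tm_def by auto
  qed
  have TJ': "T J' = (T^^H) V" unfolding J'_def by (simp add: TH)
  have key: "\<forall>s. T J' $ s \<le> Tm mu' J' $ s + \<delta>"
  proof
    fix s show "T J' $ s \<le> Tm mu' J' $ s + \<delta>"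
      using s2[rule_format, of s] s3[rule_format, of s] s4[rule_format, of s] unfolding \<delta>_def TJ' by linarith
  qed
  have VTV: "\<forall>s. V $ s \<le> T V $ s + 0"
    by (metis V_def Jpol_fix T_def Tpol_le_Tbell add_0_right)
  have s5a: "\<forall>s. (T^^(H-1)) V $ s \<le> (T^^(H-1)) (T V) $ s + \<alpha>^(H-1) * 0"
    unfolding T_def by (rule iter_shift[OF Tbell_shift VTV[unfolded T_def]])
  have eqS: "(T^^(H-1)) (T V) = (T^^Suc (H-1)) V" by (simp only: funpow_Suc_right comp_apply)
  have e2: "(T^^Suc (H-1)) V = (T^^H) V" using H by simp
  have s5: "\<forall>s. J' $ s \<le> T J' $ s + 0"
    using s5a unfolding eqS e2 TJ'[symmetric] J'_def by simp
  define x where "x = Jpol P r \<alpha> mu' - T J'"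
  have xrec: "x $ s \<ge> \<alpha> * (\<Sum>j\<in>UNIV. P (mu' s) $ s $ j * x $ j) - \<delta>" for s
  proof -
    have "Jpol P r \<alpha> mu' $ s = r s (mu' s) + \<alpha> * (\<Sum>j\<in>UNIV. P (mu' s) $ s $ j * Jpol P r \<alpha> mu' $ j)"
      by (subst Jpol_fix[symmetric]) (simp add: Tpol_def)
    moreover have "T J' $ s \<le> r s (mu' s) + \<alpha> * (\<Sum>j\<in>UNIV. P (mu' s) $ s $ j * T J' $ j) + \<delta>"
    proof -
      have "(\<Sum>j\<in>UNIV. P (mu' s) $ s $ j * J' $ j) \<le> (\<Sum>j\<in>UNIV. P (mu' s) $ s $ j * T J' $ j) + 0"
        by (rule Psum_shift[OF s5])
      then have "Tm mu' J' $ s \<le> r s (mu' s) + \<alpha> * (\<Sum>j\<in>UNIV. P (mu' s) $ s $ j * T J' $ j)"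
        unfolding Tm_def Tpol_def using apos by (simp add: mult_left_mono)
      then show ?thesis using key by (meson add_le_cancel_right order_trans)
    qed
    moreover have "(\<Sum>j\<in>UNIV. P (mu' s) $ s $ j * x $ j) = (\<Sum>j\<in>UNIV. P (mu' s) $ s $ j * Jpol P r \<alpha> mu' $ j) - (\<Sum>j\<in>UNIV. P (mu' s) $ s $ j * T J' $ j)"
      unfolding x_def by (simp add: right_diff_distrib sum_subtractf)
    ultimately show ?thesis unfolding x_def by (simp add: right_diff_distrib)
  qed
  define m where "m = Min (range (\<lambda>s. x $ s))"
  have mle: "m \<le> x $ s" for s unfolding m_def by (rule Min_le) auto
  have "m \<in> range (\<lambda>s. x $ s)" unfolding m_def by (rule Min_in) auto
  then obtain s0 where s0: "x $ s0 = m" by auto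
  have "\<alpha> * m \<le> \<alpha> * (\<Sum>j\<in>UNIV. P (mu' s0) $ s0 $ j * x $ j)"
    using Psum_lower[of m x "mu' s0" s0] mle apos by (simp add: mult_left_mono)
  then have "m \<ge> \<alpha> * m - \<delta>"
    using xrec[of s0] s0 by linarith
  then have mlow: "m \<ge> - \<delta> / (1 - \<alpha>)" using alt1 by (simp add: field_simps)
  have lowJ: "Jpol P r \<alpha> mu' $ s \<ge> (T ^^ H) V $ s - \<delta> / (1 - \<alpha>)" for s
    using mle[of s] mlow unfolding x_def J'_def TH by simp
  have upJ: "Jstar P r \<alpha> $ s \<le> (T ^^ H) V $ s + \<alpha>^H * a" for s
  proof -
    obtain nu where nu: "Jstar P r \<alpha> $ s = Jpol P r \<alpha> nu $ s" using Jstar_attained by blast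
    have h1: "\<forall>s. Jpol P r \<alpha> nu $ s \<le> Jstar P r \<alpha> $ s + 0" using Jstar_ge by simp
    have h2: "\<forall>s. Jstar P r \<alpha> $ s \<le> V $ s + a"
    proof fix s show "Jstar P r \<alpha> $ s \<le> V $ s + a"
      using supnorm_ge[of "V - Jstar P r \<alpha>" s] unfolding a_def by (auto simp: abs_le_iff) qed
    have "Jpol P r \<alpha> nu $ s = (Tm nu ^^ H) (Jpol P r \<alpha> nu) $ s" unfolding Tm_def by (simp add: Jpol_fix_iter)
    also have "\<dots> \<le> (Tm nu ^^ H) (Jstar P r \<alpha>) $ s"
      using iter_shift[where n=H, OF Tpol_shift h1] unfolding Tm_def by simp
    also have "\<dots> \<le> (Tm nu ^^ H) V $ s + \<alpha>^H * a"
      using iter_shift[where n=H, OF Tpol_shift h2] unfolding Tm_def by simp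
    also have "\<dots> \<le> (T ^^ H) V $ s + \<alpha>^H * a"
      unfolding Tm_def T_def using Tpol_iter_le by simp
    finally show ?thesis using nu by simp
  qed
  have "supnorm (Jpol P r \<alpha> mu' - Jstar P r \<alpha>) \<le> \<alpha>^H * a + \<delta> / (1 - \<alpha>)"
  proof (rule supnorm_le)
    fix s
    show "\<bar>(Jpol P r \<alpha> mu' - Jstar P r \<alpha>) $ s\<bar> \<le> \<alpha>^H * a + \<delta> / (1 - \<alpha>)"
      using lowJ[of s] upJ[of s] Jstar_ge[of mu' s] by (simp add: abs_le_iff)
  qed
  moreover have "supnorm (J - V) = supnorm (J - Jpol P r \<alpha> mu)" by (simp add: V_def)
  ultimately show ?thesis
    unfolding a_def V_def \<delta>_def e_def by (simp add: supnorm_commute[of "Jpol P r \<alpha> mu"])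
qed

end



definition symm :: "real^'n::finite^'n \<Rightarrow> bool" where "symm A \<longleftrightarrow> transpose A = A"

lemma symm_inner: "symm A \<Longrightarrow> x \<bullet> (A *v y) = (A *v x) \<bullet> y"
  unfolding symm_def by (metis dot_lmul_matrix transpose_matrix_vector)

lemma cont_q: "continuous_on S (\<lambda>x::real^'n::finite. x \<bullet> (A *v x))"
  by (intro continuous_on_inner continuous_on_id linear_continuous_on)
     (simp add: linear_conv_bounded_linear[symmetric])

lemma eig_max:
  fixes A :: "real^'n::finite^'n"
  assumes S: "symm A"
  shows "\<exists>l\<in>eigenvalues A. \<forall>x. x \<bullet> (A *v x) \<le> l * (x \<bullet> x)"
proof -
  define q where "q x = x \<bullet> (A *v x)" for x :: "real^'n"
  have ne: "sphere (0::real^'n) 1 \<noteq> {}" using vector_choose_size[of 1] by auto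
  obtain x0 where x0: "x0 \<in> sphere 0 1" and mx: "\<And>y. y \<in> sphere 0 1 \<Longrightarrow> q y \<le> q x0"
    using continuous_attains_sup[OF compact_sphere ne cont_q[of _ A]] unfolding q_def by blast
  define l where "l = q x0"
  have nx0: "norm x0 = 1" using x0 by simp
  have x0x0: "x0 \<bullet> x0 = 1" using nx0 by (simp add: dot_square_norm)
  have bound: "q x \<le> l * (x \<bullet> x)" for x
  proof (cases "x = 0")
    case True then show ?thesis by (simp add: q_def)
  next
    case False
    define y where "y = (1 / norm x) *\<^sub>R x"
    have "y \<in> sphere 0 1" using False by (simp add: y_def)
    then have "q y \<le> l" using mx l_def by blast
    moreover have "q y = q x / (norm x)^2"
      by (simp add: q_def y_def matrix_vector_mult_scaleR power2_eq_square)
    moreover have "x \<bullet> x = (norm x)^2" by (simp add: power2_norm_eq_inner)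
    moreover have "(norm x)^2 > 0" using False by simp
    ultimately show ?thesis by (simp add: divide_le_eq mult.commute)
  qed
  define u where "u = A *v x0 - l *\<^sub>R x0"
  have expand: "q (x0 + t *\<^sub>R y) = q x0 + 2 * t * (y \<bullet> (A *v x0)) + t^2 * q y" for t y
  proof -
    have "x0 \<bullet> (A *v y) = y \<bullet> (A *v x0)" using symm_inner[OF S, of x0 y] by (simp add: inner_commute)
    moreover have "A *v (x0 + t *\<^sub>R y) = A *v x0 + t *\<^sub>R (A *v y)"
      by (simp add: matrix_vector_right_distrib matrix_vector_mult_scaleR)
    moreover have "(x0 + t *\<^sub>R y) \<bullet> (A *v x0 + t *\<^sub>R (A *v y))
       = x0 \<bullet> (A *v x0) + t * (x0 \<bullet> (A *v y)) + t * (y \<bullet> (A *v x0)) + t * t * (y \<bullet> (A *v y))"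
      by (simp add: inner_add_left inner_add_right algebra_simps)
    ultimately show ?thesis by (simp add: q_def power2_eq_square)
  qed
  have ineq: "2 * t * (y \<bullet> u) \<le> t^2 * (l * (y \<bullet> y) - q y)" for t y
  proof -
    have "q (x0 + t *\<^sub>R y) \<le> l * ((x0 + t *\<^sub>R y) \<bullet> (x0 + t *\<^sub>R y))" by (rule bound)
    moreover have "(x0 + t *\<^sub>R y) \<bullet> (x0 + t *\<^sub>R y) = x0 \<bullet> x0 + t * (x0 \<bullet> y) + t * (y \<bullet> x0) + t * t * (y \<bullet> y)"
      by (simp add: inner_add_left inner_add_right algebra_simps)
    moreover have "y \<bullet> x0 = x0 \<bullet> y" by (rule inner_commute)
    moreover have "y \<bullet> u = y \<bullet> (A *v x0) - l * (y \<bullet> x0)" by (simp add: u_def inner_diff_right)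
    ultimately have H1: "l + 2 * t * (y \<bullet> (A *v x0)) + t^2 * q y \<le> l * (1 + 2 * t * (x0 \<bullet> y) + t^2 * (y \<bullet> y))"
      and H2: "y \<bullet> u = y \<bullet> (A *v x0) - l * (x0 \<bullet> y)"
      using expand[of t y] x0x0 unfolding l_def by (simp_all add: power2_eq_square algebra_simps)
    have "t^2 * (l * (y \<bullet> y) - q y) - 2 * t * (y \<bullet> u)
        = l * (1 + 2 * t * (x0 \<bullet> y) + t^2 * (y \<bullet> y)) - (l + 2 * t * (y \<bullet> (A *v x0)) + t^2 * q y)"
      unfolding H2 by (simp add: algebra_simps power2_eq_square)
    then show ?thesis using H1 by linarith
  qed
  have u0: "u = 0"
  proof (rule ccontr)
    assume "u \<noteq> 0"
    then have b: "u \<bullet> u > 0" by simp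
    define k where "k = l * (u \<bullet> u) - q u"
    have k0: "k \<ge> 0" using bound[of u] by (simp add: k_def)
    define t where "t = (u \<bullet> u) / (k + 1)"
    have t0: "t > 0" using b k0 by (simp add: t_def)
    have "2 * t * (u \<bullet> u) \<le> t^2 * k" using ineq[of t u] by (simp add: k_def)
    then have "2 * (u \<bullet> u) \<le> t * k" using t0 by (simp add: power2_eq_square)
    moreover have "t * k < u \<bullet> u"
    proof -
      have "t * k = (u \<bullet> u) * (k / (k + 1))" by (simp add: t_def)
      also have "\<dots> < (u \<bullet> u) * 1" using b k0 by (intro mult_strict_left_mono) auto
      finally show ?thesis by simp
    qed
    ultimately show False using b by linarith
  qed
  have "x0 \<noteq> 0" using nx0 by auto
  moreover have "A *v x0 = l *\<^sub>R x0" using u0 by (simp add: u_def)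
  ultimately have "l \<in> eigenvalues A" unfolding eigenvalues_def by blast
  then show ?thesis using bound unfolding q_def by blast
qed

definition negm :: "real^'n::finite^'n \<Rightarrow> real^'n^'n" where "negm A = (\<chi> i j. - (A $ i $ j))"

lemma neg_mv: "negm A *v x = - (A *v x)"
proof -
  have "(negm A *v x) $ i = - ((A *v x) $ i)" for i
    unfolding negm_def matrix_vector_mult_def by (simp add: sum_negf[symmetric])
  then show ?thesis by (simp add: vec_eq_iff)
qed

lemma eig_min:
  fixes A :: "real^'n::finite^'n"
  assumes S: "symm A"
  shows "\<exists>l\<in>eigenvalues A. \<forall>x. l * (x \<bullet> x) \<le> x \<bullet> (A *v x)"
proof -
  have "symm (negm A)" using S unfolding symm_def negm_def transpose_def
    by (simp add: vec_eq_iff)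
  from eig_max[OF this] obtain l where l: "l \<in> eigenvalues (negm A)" "\<forall>x. x \<bullet> (negm A *v x) \<le> l * (x \<bullet> x)" by blast
  from l(1) obtain v where v: "v \<noteq> 0" "negm A *v v = l *\<^sub>R v" unfolding eigenvalues_def by blast
  have "A *v v = (- l) *\<^sub>R v" using v(2) unfolding neg_mv by (simp add: minus_equation_iff[of "A *v v"])
  then have "- l \<in> eigenvalues A" using v(1) unfolding eigenvalues_def by blast
  moreover have "\<forall>x. (- l) * (x \<bullet> x) \<le> x \<bullet> (A *v x)"
  proof
    fix x show "(- l) * (x \<bullet> x) \<le> x \<bullet> (A *v x)" using l(2)[rule_format, of x] by (simp add: neg_mv)
  qed
  ultimately show ?thesis by blast
qed
lemma eig_nonempty: "symm A \<Longrightarrow> eigenvalues A \<noteq> {}"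
  using eig_max by blast

lemma eig_finite:
  fixes A :: "real^'n::finite^'n"
  assumes S: "symm A"
  shows "finite (eigenvalues A)"
proof -
  define ev where "ev l = (SOME v. v \<noteq> 0 \<and> A *v v = l *\<^sub>R v)" for l
  have evp: "ev l \<noteq> 0 \<and> A *v ev l = l *\<^sub>R ev l" if "l \<in> eigenvalues A" for l
  proof -
    from that obtain v where "v \<noteq> 0 \<and> A *v v = l *\<^sub>R v" unfolding eigenvalues_def by blast
    then show ?thesis unfolding ev_def by (rule someI)
  qed
  have inj: "inj_on ev (eigenvalues A)"
  proof (rule inj_onI)
    fix l1 l2 assume a: "l1 \<in> eigenvalues A" "l2 \<in> eigenvalues A" "ev l1 = ev l2"
    then have "l1 *\<^sub>R ev l1 = l2 *\<^sub>R ev l1" using evp by metis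
    then show "l1 = l2" using evp[OF a(1)] by (simp add: scaleR_cancel_right)
  qed
  have orth: "pairwise orthogonal (ev ` eigenvalues A)"
  proof (clarsimp simp: pairwise_def)
    fix l1 l2 assume a: "l1 \<in> eigenvalues A" "l2 \<in> eigenvalues A" "ev l1 \<noteq> ev l2"
    then have ne: "l1 \<noteq> l2" by auto
    have "l1 * (ev l1 \<bullet> ev l2) = (A *v ev l1) \<bullet> ev l2" using evp[OF a(1)] by simp
    also have "\<dots> = ev l1 \<bullet> (A *v ev l2)" using symm_inner[OF S] by simp
    also have "\<dots> = l2 * (ev l1 \<bullet> ev l2)" using evp[OF a(2)] by simp
    finally show "orthogonal (ev l1) (ev l2)" using ne unfolding orthogonal_def by simp
  qed
  have "0 \<notin> ev ` eigenvalues A" using evp by auto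
  then have "independent (ev ` eigenvalues A)" using pairwise_orthogonal_independent orth by blast
  then have "finite (ev ` eigenvalues A)" using independent_bound by blast
  then show ?thesis using finite_imageD inj by blast
qed

lemma symm_norm_bound:
  fixes B :: "real^'n::finite^'n"
  assumes S: "symm B" and ev: "\<And>l. l \<in> eigenvalues B \<Longrightarrow> \<bar>l\<bar> \<le> a"
  shows "norm (B *v x) \<le> a * norm x"
proof -
  obtain l0 where "l0 \<in> eigenvalues B" using eig_nonempty[OF S] by blast
  from ev[OF this] have a0: "0 \<le> a" by linarith
  have SB: "symm (B ** B)" using S unfolding symm_def by (simp add: matrix_transpose_mul)
  obtain mu where mu: "mu \<in> eigenvalues (B ** B)" "\<forall>x. x \<bullet> ((B ** B) *v x) \<le> mu * (x \<bullet> x)"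
    using eig_max[OF SB] by blast
  have qq: "x \<bullet> ((B ** B) *v x) = (B *v x) \<bullet> (B *v x)" for x
    using symm_inner[OF S, of x "B *v x"] by (simp add: matrix_vector_mul_assoc[symmetric])
  obtain v where v: "v \<noteq> 0" "(B ** B) *v v = mu *\<^sub>R v" using mu(1) unfolding eigenvalues_def by blast
  have e1: "mu * (v \<bullet> v) = (B *v v) \<bullet> (B *v v)" using qq[of v] v(2) by simp
  have vp: "0 < v \<bullet> v" using v(1) by simp
  have "mu = ((B *v v) \<bullet> (B *v v)) / (v \<bullet> v)" using e1 vp by (simp add: eq_divide_eq)
  moreover have "0 \<le> ((B *v v) \<bullet> (B *v v)) / (v \<bullet> v)" using vp by (intro divide_nonneg_pos) simp_all
  ultimately have mu0: "mu \<ge> 0" by simp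
  define s where "s = sqrt mu"
  have ss: "s * s = mu" using mu0 by (simp add: s_def)
  have s0: "s \<ge> 0" using mu0 by (simp add: s_def)
  define w where "w = B *v v + s *\<^sub>R v"
  have Bw: "B *v w = s *\<^sub>R w"
  proof -
    have "B *v w = B *v (B *v v) + s *\<^sub>R (B *v v)"
      by (simp add: w_def matrix_vector_right_distrib matrix_vector_mult_scaleR)
    also have "B *v (B *v v) = (s * s) *\<^sub>R v" using v(2) ss by (simp add: matrix_vector_mul_assoc)
    also have "(s * s) *\<^sub>R v + s *\<^sub>R (B *v v) = s *\<^sub>R w"
      by (simp add: w_def scaleR_add_right add.commute)
    finally show ?thesis .
  qed
  have "s \<le> a"
  proof (cases "w = 0")
    case True
    then have "B *v v = - (s *\<^sub>R v)" unfolding w_def by (rule eq_neg_iff_add_eq_0[THEN iffD2])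
    then have "B *v v = (- s) *\<^sub>R v" by simp
    then have "- s \<in> eigenvalues B" using v(1) unfolding eigenvalues_def by blast
    from ev[OF this] show ?thesis using s0 by simp
  next
    case False
    then have "s \<in> eigenvalues B" using Bw unfolding eigenvalues_def by blast
    from ev[OF this] show ?thesis using s0 by simp
  qed
  then have "s * s \<le> a * a" using mult_mono[OF \<open>s \<le> a\<close> \<open>s \<le> a\<close> a0 s0] by simp
  then have mua: "mu \<le> a^2" using ss by (simp add: power2_eq_square)
  have "(norm (B *v x))^2 = x \<bullet> ((B ** B) *v x)" using qq by (simp add: power2_norm_eq_inner)
  also have "\<dots> \<le> mu * (x \<bullet> x)" using mu(2) by blast
  also have "\<dots> \<le> a^2 * (x \<bullet> x)" using mult_right_mono[OF mua, of "x \<bullet> x"] by simp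
  also have "\<dots> = (a * norm x)^2" by (simp add: power_mult_distrib power2_norm_eq_inner)
  finally have "(norm (B *v x))^2 \<le> (a * norm x)^2" .
  then show ?thesis by (rule power2_le_imp_le[OF _ mult_nonneg_nonneg[OF a0 norm_ge_zero]])
qed




definition PhiD :: "'s set \<Rightarrow> real ^ 'd::finite ^ 's::finite \<Rightarrow> real ^ 'd ^ 's" where
  "PhiD D Phi = (\<chi> j a. if j \<in> D then Phi $ j $ a else 0)"

lemma restrT_eq: "restrT D Phi = transpose (PhiD D Phi)"
  by (simp add: restrT_def PhiD_def transpose_def vec_eq_iff)

lemma gram_eq: "gram D Phi = transpose (PhiD D Phi) ** PhiD D Phi"
proof -
  have "(\<Sum>j\<in>UNIV. (if j \<in> D then Phi $ j $ a else 0) * (if j \<in> D then Phi $ j $ b else 0))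
      = (\<Sum>j\<in>D. Phi $ j $ a * Phi $ j $ b)" for a b
  proof -
    have "(\<Sum>j\<in>UNIV. (if j \<in> D then Phi $ j $ a else 0) * (if j \<in> D then Phi $ j $ b else 0))
      = (\<Sum>j\<in>UNIV. if j \<in> D then Phi $ j $ a * Phi $ j $ b else 0)" by (rule sum.cong) auto
    also have "\<dots> = (\<Sum>j\<in>UNIV \<inter> D. Phi $ j $ a * Phi $ j $ b)" by (rule sum.inter_restrict[symmetric]) simp
    finally show ?thesis by simp
  qed
  then show ?thesis
    by (simp add: gram_def PhiD_def transpose_def matrix_matrix_mult_def vec_eq_iff)
qed

lemma quad_transpose: "x \<bullet> ((transpose A ** A) *v x) = (A *v x) \<bullet> (A *v (x::real^'n::finite))"
proof -
  have "x \<bullet> ((transpose A ** A) *v x) = x \<bullet> (transpose A *v (A *v x))" by (simp add: matrix_vector_mul_assoc)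
  also have "\<dots> = x \<bullet> ((A *v x) v* A)" by simp
  also have "\<dots> = ((A *v x) v* A) \<bullet> x" by (rule inner_commute)
  also have "\<dots> = (A *v x) \<bullet> (A *v x)" by (rule dot_lmul_matrix)
  finally show ?thesis .
qed

lemma symm_tt: "symm (transpose A ** A)"
  unfolding symm_def by (simp add: matrix_transpose_mul)

lemma symm_gram: "symm (gram D Phi)"
  unfolding gram_eq by (rule symm_tt)

lemma row_mv: "(A *v x) $ i = (A $ i) \<bullet> x"
  by (simp add: matrix_vector_mult_def inner_vec_def)

lemma PhiD_mv: "(PhiD D Phi *v x) $ i = (if i \<in> D then (Phi $ i) \<bullet> x else 0)"
  by (simp add: matrix_vector_mult_def inner_vec_def PhiD_def)

lemma rows_zero:
  fixes Phi :: "real ^ 'd::finite ^ 's::finite"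
  assumes rk: "dim ((\<lambda>i. Phi $ i) ` D) = CARD('d)"
    and z: "\<And>i. i \<in> D \<Longrightarrow> (Phi $ i) \<bullet> x = 0"
  shows "x = 0"
proof -
  have sp: "span ((\<lambda>i. Phi $ i) ` D) = UNIV" using dim_eq_full[of "(\<lambda>i. Phi $ i) ` D"] rk by simp
  have "orthogonal x x"
    by (rule orthogonal_to_span[of x "(\<lambda>i. Phi $ i) ` D"]) (use sp z in \<open>auto simp: orthogonal_def inner_commute\<close>)
  then show ?thesis by (simp add: orthogonal_def)
qed

lemma gram_inj:
  fixes Phi :: "real ^ 'd::finite ^ 's::finite"
  assumes rk: "dim ((\<lambda>i. Phi $ i) ` D) = CARD('d)" and g: "gram D Phi *v x = 0"
  shows "x = 0"
proof -
  have "(PhiD D Phi *v x) \<bullet> (PhiD D Phi *v x) = 0"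
    using quad_transpose[of x "PhiD D Phi"] g unfolding gram_eq by simp
  then have "PhiD D Phi *v x = 0" by simp
  then have "(PhiD D Phi *v x) $ i = 0" for i by simp
  then show ?thesis using rk by (intro rows_zero[OF rk]) (metis PhiD_mv)
qed

lemma gram_invertible:
  fixes Phi :: "real ^ 'd::finite ^ 's::finite"
  assumes rk: "dim ((\<lambda>i. Phi $ i) ` D) = CARD('d)"
  shows "gram D Phi ** matrix_inv (gram D Phi) = mat 1"
proof -
  have "\<exists>B. B ** gram D Phi = mat 1"
    using gram_inj[OF rk] by (subst matrix_left_invertible_ker) blast
  then have "invertible (gram D Phi)" by (simp add: invertible_left_inverse)
  then show ?thesis unfolding invertible_def matrix_inv_def by (rule someI_ex[THEN conjunct1])
qed

definition Bm :: "real \<Rightarrow> real^'n::finite^'n \<Rightarrow> real^'n^'n" where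
  "Bm \<gamma> G = mat 1 - \<gamma> *\<^sub>R G"

lemma Bm_mv: "Bm \<gamma> G *v x = x - \<gamma> *\<^sub>R (G *v x)"
  unfolding Bm_def by (simp add: matrix_vector_mult_diff_rdistrib scaleR_matrix_vector_assoc)

lemma symm_Bm: "symm G \<Longrightarrow> symm (Bm \<gamma> G)"
  unfolding symm_def Bm_def transpose_def by (simp add: vec_eq_iff mat_def)

lemma Bm_eig:
  assumes "\<gamma> > 0" and "l \<in> eigenvalues (Bm \<gamma> G)"
  shows "\<exists>m\<in>eigenvalues G. l = 1 - \<gamma> * m"
proof -
  from assms(2) obtain v where v: "v \<noteq> 0" "v - \<gamma> *\<^sub>R (G *v v) = l *\<^sub>R v"
    unfolding eigenvalues_def Bm_mv by blast
  have "\<gamma> *\<^sub>R (G *v v) = (1 - l) *\<^sub>R v" using v(2) by (simp add: algebra_simps)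
  then have "G *v v = ((1 - l) / \<gamma>) *\<^sub>R v" using assms(1)
    by (metis (no_types, lifting) divide_inverse_commute less_irrefl scaleR_scaleR inverse_eq_divide
        scaleR_one right_inverse mult.commute)
  then have "(1 - l) / \<gamma> \<in> eigenvalues G" using v(1) unfolding eigenvalues_def by blast
  moreover have "l = 1 - \<gamma> * ((1 - l) / \<gamma>)" using assms(1) by simp
  ultimately show ?thesis by blast
qed

lemma gd_iter:
  assumes Gt: "gram D Phi *v ts = restrT D Phi *v Jh"
  shows "(gd_step \<gamma> D Phi Jh ^^ n) t - ts = ((*v) (Bm \<gamma> (gram D Phi)) ^^ n) (t - ts)"
proof (induction n)
  case 0 then show ?case by simp
next
  case (Suc n)
  have "gd_step \<gamma> D Phi Jh y - ts = Bm \<gamma> (gram D Phi) *v (y - ts)" for y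
    unfolding gd_step_def Bm_mv Gt[symmetric] by (simp add: matrix_vector_mult_diff_distrib algebra_simps)
  then show ?case using Suc by simp
qed

lemma iter_norm:
  fixes B :: "real^'n::finite^'n"
  assumes "\<And>y. norm (B *v y) \<le> a * norm y" "0 \<le> a"
  shows "norm (((*v) B ^^ n) y) \<le> a^n * norm (y::real^'n::finite)"
proof (induction n)
  case 0 then show ?case by simp
next
  case (Suc n)
  have "norm (((*v) B ^^ Suc n) y) \<le> a * norm (((*v) B ^^ n) y)" using assms(1) by simp
  also have "\<dots> \<le> a * (a^n * norm y)" using Suc assms(2) by (simp add: mult_left_mono)
  finally show ?case by simp
qed

lemma sigma_bound:
  fixes Phi :: "real ^ 'd::finite ^ 's::finite"
  assumes rk: "dim ((\<lambda>i. Phi $ i) ` D) = CARD('d)"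
  shows "sigma_min Phi > 0 \<and> (\<forall>x. sigma_min Phi * norm x \<le> norm (Phi *v x))"
proof -
  define A where "A = transpose Phi ** Phi"
  have S: "symm A" unfolding A_def by (rule symm_tt)
  have q: "x \<bullet> (A *v x) = (Phi *v x) \<bullet> (Phi *v x)" for x unfolding A_def by (rule quad_transpose)
  have inj: "Phi *v x = 0 \<Longrightarrow> x = 0" for x
    by (rule rows_zero[OF rk]) (metis row_mv zero_index)
  have pos: "l > 0" if "l \<in> eigenvalues A" for l
  proof -
    from that obtain v where v: "v \<noteq> 0" "A *v v = l *\<^sub>R v" unfolding eigenvalues_def by blast
    have "l * (v \<bullet> v) = (Phi *v v) \<bullet> (Phi *v v)" using q[of v] v(2) by simp
    moreover have "Phi *v v \<noteq> 0" using inj v(1) by blast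
    then have "(Phi *v v) \<bullet> (Phi *v v) > 0" by simp
    moreover have "v \<bullet> v > 0" using v(1) by simp
    ultimately show ?thesis by (metis zero_less_mult_pos2 mult.commute)
  qed
  have fin: "finite (eigenvalues A)" by (rule eig_finite[OF S])
  have ne: "eigenvalues A \<noteq> {}" by (rule eig_nonempty[OF S])
  define m where "m = Min (eigenvalues A)"
  have mpos: "m > 0" unfolding m_def using Min_in[OF fin ne] pos by blast
  obtain l0 where l0: "l0 \<in> eigenvalues A" "\<forall>x. l0 * (x \<bullet> x) \<le> x \<bullet> (A *v x)" using eig_min[OF S] by blast
  have ml: "m \<le> l0" unfolding m_def using fin l0(1) by simp
  have sm: "sigma_min Phi = sqrt m" unfolding sigma_min_def m_def A_def by simp
  have "sqrt m * norm x \<le> norm (Phi *v x)" for x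
  proof -
    have "(sqrt m * norm x)^2 = m * (x \<bullet> x)" using mpos by (simp add: power_mult_distrib power2_norm_eq_inner)
    also have "\<dots> \<le> l0 * (x \<bullet> x)" using ml by (simp add: mult_right_mono)
    also have "\<dots> \<le> (Phi *v x) \<bullet> (Phi *v x)" using l0(2) q by simp
    also have "\<dots> = (norm (Phi *v x))^2" by (simp add: power2_norm_eq_inner)
    finally show ?thesis by (rule power2_le_imp_le) simp
  qed
  then show ?thesis using mpos sm by simp
qed




lemma gd_error:
  fixes Phi :: "real ^ 'd::finite ^ 's::finite"
  assumes rk: "dim ((\<lambda>i. Phi $ i) ` D) = CARD('d)"
    and gam: "\<gamma> > 0"
    and ev: "\<And>l. l \<in> eigenvalues (gram D Phi) \<Longrightarrow> \<bar>1 - \<gamma> * l\<bar> \<le> a"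
  shows "supnorm (Phi *v (gd_step \<gamma> D Phi Jh ^^ n) t - Mproj D Phi *v Jh)
    \<le> sqrt (real CARD('s)) * matnorm_inf Phi / sigma_min Phi * a^n * supnorm (Phi *v t - Mproj D Phi *v Jh)"
proof -
  define G where "G = gram D Phi"
  define ts where "ts = matrix_inv G *v (restrT D Phi *v Jh)"
  have Gts: "G *v ts = restrT D Phi *v Jh"
  proof -
    have "G *v ts = (G ** matrix_inv G) *v (restrT D Phi *v Jh)" unfolding ts_def by (rule matrix_vector_mul_assoc)
    also have "\<dots> = restrT D Phi *v Jh" by (simp add: G_def gram_invertible[OF rk])
    finally show ?thesis .
  qed
  have Mts: "Mproj D Phi *v Jh = Phi *v ts"
    unfolding Mproj_def ts_def G_def by (simp add: matrix_vector_mul_assoc matrix_mul_assoc)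
  have SG: "symm G" unfolding G_def by (rule symm_gram)
  obtain l0 where "l0 \<in> eigenvalues G" using eig_nonempty[OF SG] by blast
  from ev[OF this[unfolded G_def]] have a0: "0 \<le> a" by linarith
  have Bn: "norm (Bm \<gamma> G *v y) \<le> a * norm y" for y
  proof (rule symm_norm_bound[OF symm_Bm[OF SG]])
    fix l assume "l \<in> eigenvalues (Bm \<gamma> G)"
    from Bm_eig[OF gam this] obtain m where "m \<in> eigenvalues G" "l = 1 - \<gamma> * m" by blast
    then show "\<bar>l\<bar> \<le> a" using ev unfolding G_def by blast
  qed
  define t' where "t' = (gd_step \<gamma> D Phi Jh ^^ n) t"
  have dt: "t' - ts = ((*v) (Bm \<gamma> G) ^^ n) (t - ts)"
    unfolding t'_def G_def by (rule gd_iter) (use Gts G_def in simp)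
  have n1: "norm (t' - ts) \<le> a^n * norm (t - ts)"
    unfolding dt by (rule iter_norm[OF Bn a0])
  obtain sg where sg: "sg = sigma_min Phi" by blast
  have sp: "sg > 0" "\<And>x. sg * norm x \<le> norm (Phi *v x)" using sigma_bound[OF rk] sg by auto
  define cS where "cS = sqrt (real CARD('s))"
  have "supnorm (Phi *v t' - Phi *v ts) = supnorm (Phi *v (t' - ts))"
    by (simp add: matrix_vector_mult_diff_distrib)
  also have "\<dots> \<le> matnorm_inf Phi * supnorm (t' - ts)" by (rule matnorm_bound)
  also have "\<dots> \<le> matnorm_inf Phi * norm (t' - ts)"
    by (rule mult_left_mono[OF supnorm_le_norm matnorm_nonneg])
  also have "\<dots> \<le> matnorm_inf Phi * (a^n * norm (t - ts))"
    by (rule mult_left_mono[OF n1 matnorm_nonneg])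
  also have "norm (t - ts) \<le> norm (Phi *v (t - ts)) / sg"
    using sp(2)[of "t - ts"] sp(1) by (simp add: le_divide_eq mult.commute)
  then have "matnorm_inf Phi * (a^n * norm (t - ts)) \<le> matnorm_inf Phi * (a^n * (norm (Phi *v (t - ts)) / sg))"
    using a0 by (intro mult_left_mono matnorm_nonneg) simp_all
  also have "norm (Phi *v (t - ts)) \<le> cS * supnorm (Phi *v (t - ts))"
    unfolding cS_def by (rule norm_le_supnorm)
  then have "matnorm_inf Phi * (a^n * (norm (Phi *v (t - ts)) / sg)) \<le> matnorm_inf Phi * (a^n * (cS * supnorm (Phi *v (t - ts)) / sg))"
    using a0 sp(1) by (intro mult_left_mono matnorm_nonneg divide_right_mono) simp_all
  also have "\<dots> = cS * matnorm_inf Phi / sg * a^n * supnorm (Phi *v t - Phi *v ts)"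
    by (simp add: matrix_vector_mult_diff_distrib)
  finally show ?thesis unfolding t'_def Mts cS_def sg .
qed

lemma box_diff:
  assumes "\<forall>s. 0 \<le> x $ s \<and> x $ s \<le> K" "\<forall>s. 0 \<le> y $ s \<and> y $ s \<le> K"
  shows "supnorm (x - y) \<le> K"
proof (rule supnorm_le)
  fix i show "\<bar>(x - y) $ i\<bar> \<le> K" using assms(1)[rule_format, of i] assms(2)[rule_format, of i] by (auto simp: abs_le_iff)
qed

lemma unroll:
  fixes a e :: "nat \<Rightarrow> real"
  assumes q0: "0 \<le> q" and q1: "q < 1" and b0: "0 \<le> \<beta>" and b1: "\<beta> < 1" and al: "\<alpha> < 1"
    and t0: "0 \<le> \<tau>" and eps: "0 \<le> \<epsilon>" and e0: "\<And>k. 0 \<le> e k"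
    and ra: "\<And>k. a (Suc k) \<le> q * a k + (\<epsilon> + 2 * q * e k) / (1 - \<alpha>)"
    and re: "\<And>k. e (Suc k) \<le> \<beta> * e k + \<tau>"
    and a0: "a 0 \<le> 1 / (1 - \<alpha>)"
  shows "a k \<le> q ^ k / (1 - \<alpha>) + 2 * q * e 0 / (1 - \<alpha>) * real k * (max q \<beta>) ^ (k - 1)
      + (2 * q * (\<tau> / (1 - \<beta>)) + \<epsilon>) / ((1 - q) * (1 - \<alpha>))"
proof -
  define E where "E = \<tau> / (1 - \<beta>)"
  have E0: "0 \<le> E" using t0 b1 by (simp add: E_def)
  have bE: "\<beta> * E + \<tau> = E" using b1 by (simp add: E_def field_simps)
  have eb: "e k \<le> \<beta>^k * e 0 + E" for k
  proof (induction k)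
    case 0 then show ?case using E0 by simp
  next
    case (Suc k)
    have "e (Suc k) \<le> \<beta> * e k + \<tau>" by (rule re)
    also have "\<dots> \<le> \<beta> * (\<beta>^k * e 0 + E) + \<tau>" using Suc b0 by (simp add: mult_left_mono)
    also have "\<dots> = \<beta>^(Suc k) * e 0 + (\<beta> * E + \<tau>)" by (simp add: algebra_simps)
    finally show ?case using bE by simp
  qed
  define M where "M = max q \<beta>"
  have M0: "0 \<le> M" using q0 by (simp add: M_def)
  define Z where "Z = 2 * q * e 0 / (1 - \<alpha>)"
  have Z0: "0 \<le> Z" using q0 e0[of 0] al by (simp add: Z_def)
  define K where "K = (2 * q * E + \<epsilon>) / (1 - \<alpha>)"
  have key: "q * (real k * M^(k - 1)) + \<beta>^k \<le> real (Suc k) * M^k" for k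
  proof -
    have "q * (real k * M^(k - 1)) \<le> real k * M^k"
    proof (cases k)
      case 0 then show ?thesis by simp
    next
      case (Suc j)
      have "q * M^j \<le> M * M^j" using M0 by (intro mult_right_mono) (simp_all add: M_def)
      then have "real k * (q * M^j) \<le> real k * (M * M^j)" by (intro mult_left_mono) simp_all
      then show ?thesis using Suc by (simp add: algebra_simps)
    qed
    moreover have "\<beta>^k \<le> M^k" using b0 by (intro power_mono) (simp_all add: M_def)
    ultimately show ?thesis by (simp add: algebra_simps)
  qed
  have main: "a k \<le> q^k * a 0 + Z * (real k * M^(k - 1)) + K / (1 - q)" for k
  proof (induction k)
    case 0 then show ?case using q1 eps E0 q0 al by (simp add: K_def)
  next
    case (Suc k)
    have "a (Suc k) \<le> q * a k + (\<epsilon> + 2 * q * e k) / (1 - \<alpha>)" by (rule ra)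
    also have "\<dots> \<le> q * (q^k * a 0 + Z * (real k * M^(k - 1)) + K / (1 - q)) + (\<epsilon> + 2 * q * (\<beta>^k * e 0 + E)) / (1 - \<alpha>)"
    proof -
      have h1: "q * a k \<le> q * (q^k * a 0 + Z * (real k * M^(k - 1)) + K / (1 - q))"
        using Suc q0 by (rule mult_left_mono)
      have h2: "\<epsilon> + 2 * q * e k \<le> \<epsilon> + 2 * q * (\<beta>^k * e 0 + E)" using eb[of k] q0 by (simp add: mult_left_mono)
      have "1 - \<alpha> \<ge> 0" using al by simp
      from add_mono[OF h1 divide_right_mono[OF h2 this]] show ?thesis .
    qed
    also have "\<dots> = q^(Suc k) * a 0 + Z * (q * (real k * M^(k - 1)) + \<beta>^k) + (q * (K / (1 - q)) + K)"
      unfolding Z_def K_def using al by (simp add: field_simps)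
    also have "q * (K / (1 - q)) + K = K / (1 - q)" using q1 by (simp add: field_simps)
    also have "Z * (q * (real k * M^(k - 1)) + \<beta>^k) \<le> Z * (real (Suc k) * M^(Suc k - 1))"
      using key[of k] Z0 by (simp add: mult_left_mono)
    finally show ?case by simp
  qed
  have "q^k * a 0 \<le> q^k * (1 / (1 - \<alpha>))" using a0 q0 by (intro mult_left_mono) simp_all
  then have "q^k * a 0 \<le> q^k / (1 - \<alpha>)" by simp
  then have "a k \<le> q^k / (1 - \<alpha>) + Z * (real k * M^(k - 1)) + K / (1 - q)" using main[of k] by linarith
  moreover have "K / (1 - q) = (2 * q * (\<tau> / (1 - \<beta>)) + \<epsilon>) / ((1 - q) * (1 - \<alpha>))"
    by (simp add: K_def E_def)
  ultimately show ?thesis by (simp add: Z_def M_def mult.assoc)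
qed




theorem theorem2:
  fixes P :: "'a::finite \<Rightarrow> real ^ 's::finite ^ 's"
    and r :: "'s \<Rightarrow> 'a \<Rightarrow> real"
    and \<alpha> \<gamma> \<epsilon>LA \<epsilon>PE :: real
    and m H \<eta> :: nat
    and Phi :: "real ^ 'd::finite ^ 's"
    and D :: "nat \<Rightarrow> 's set"
    and mu :: "nat \<Rightarrow> ('s \<Rightarrow> 'a)"
    and w :: "nat \<Rightarrow> real ^ 's"
    and \<theta> :: "nat \<Rightarrow> real ^ 'd"
    and J :: "nat \<Rightarrow> real ^ 's"
    and \<delta>FV \<delta>app \<alpha>GD c \<beta> \<tau> :: real
  defines "T \<equiv> Tbell P r \<alpha>"
    and "Tmu \<equiv> Tpol P r \<alpha>"
  assumes mdp: "is_mdp P r \<alpha>"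
    and m: "m \<ge> 1" and H: "H \<ge> 1" and eta: "\<eta> \<ge> 1"
    and gamma: "\<gamma> > 0"
    and eps: "\<epsilon>LA \<ge> 0" "\<epsilon>PE \<ge> 0"
    and rank: "\<And>k. dim ((\<lambda>i. Phi $ i) ` D k) = CARD('d)"
    and J_def: "\<And>k. J k = Phi *v \<theta> k"
    and greedy: "\<And>k. supnorm ((T ^^ H) (J k) - Tmu (mu (Suc k)) ((T ^^ (H - 1)) (J k))) \<le> \<epsilon>LA"
    and w_supp: "\<And>k i. i \<notin> D k \<Longrightarrow> w (Suc k) $ i = 0"
    and w_bound: "\<And>k. supnorm (w (Suc k)) \<le> \<epsilon>PE"
    and theta_step: "\<And>k. \<theta> (Suc k) =
          (gd_step \<gamma> (D k) Phi ((Tmu (mu (Suc k)) ^^ m) ((T ^^ (H - 1)) (J k)) + w (Suc k)) ^^ \<eta>) (\<theta> k)"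
    and dFV: "\<delta>FV = (SUP k. matnorm_inf (Mproj (D k) Phi))"
    and dapp: "\<delta>app = (SUP k. SUP pol. supnorm (Mproj (D k) Phi *v Jpol P r \<alpha> pol - Jpol P r \<alpha> pol))"
    and aGD: "\<alpha>GD = (SUP k. Max ((\<lambda>l. \<bar>1 - \<gamma> * l\<bar>) ` eigenvalues (gram (D k) Phi)))"
    and aGD1: "\<alpha>GD < 1"
    and mH: "real (m + H - 1) > ln (2 * \<delta>FV) / ln (1 / \<alpha>)"
    and eta_big: "real \<eta> > ln (3 * sqrt (real CARD('s)) * matnorm_inf Phi / sigma_min Phi) / ln (1 / \<alpha>GD)"
    and c_def: "c = sqrt (real CARD('s)) * matnorm_inf Phi / sigma_min Phi"
    and beta_def: "\<beta> = \<alpha> ^ (m + H - 1) * \<delta>FV + c * \<alpha>GD ^ \<eta> * (\<alpha> ^ (m + H - 1) * \<delta>FV + 1)"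
    and tau_def: "\<tau> = (1 + c * \<alpha>GD ^ \<eta>) * ((\<alpha> ^ m + \<alpha> ^ (m + H - 1)) / (1 - \<alpha>) * \<delta>FV + \<delta>app + \<delta>FV * \<epsilon>PE)
                     + c * \<alpha>GD ^ \<eta> / (1 - \<alpha>)"
  shows "\<beta> < 1 \<and>
    (\<forall>k\<ge>1. supnorm (Jpol P r \<alpha> (mu k) - Jstar P r \<alpha>)
       \<le> \<alpha> ^ (k * H) / (1 - \<alpha>)
         + 2 * \<alpha> ^ H * supnorm (Jpol P r \<alpha> (mu 0) - J 0) / (1 - \<alpha>) * real k * (max (\<alpha> ^ H) \<beta>) ^ (k - 1)
         + (2 * \<alpha> ^ H * (\<tau> / (1 - \<beta>)) + \<epsilon>LA) / ((1 - \<alpha> ^ H) * (1 - \<alpha>)))"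
proof -
  interpret mdpc P r \<alpha> by (rule mdpc.intro[OF mdp])
  have Tdef: "T = Tbell P r \<alpha>" by (simp add: T_def)
  have Tmdef: "Tmu = Tpol P r \<alpha>" by (simp add: Tmu_def)
  define K where "K = 1 / (1 - \<alpha>)"
  have a0: "0 < \<alpha>" and a1: "\<alpha> < 1" using apos alt1 by auto
  have K0: "0 \<le> K" using a1 by (simp add: K_def)
  define V where "V k = Jpol P r \<alpha> (mu k)" for k
  define e where "e k = supnorm (J k - V k)" for k
  define av where "av k = supnorm (V k - Jstar P r \<alpha>)" for k
  have finr: "finite (range (\<lambda>k. f (D k)))" for f :: "'s set \<Rightarrow> real"
  proof -
    have "range (\<lambda>k. f (D k)) \<subseteq> range f" by auto
    moreover have "finite (range f)" by simp
    ultimately show ?thesis by (rule finite_subset)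
  qed
  have fv_le: "matnorm_inf (Mproj (D k) Phi) \<le> \<delta>FV" for k
    unfolding dFV by (rule cSUP_upper) (auto intro: bdd_above_finite finr)
  have dFV0: "0 \<le> \<delta>FV" using fv_le[of 0] matnorm_nonneg order_trans by blast
  have app_le: "supnorm (Mproj (D k) Phi *v Jpol P r \<alpha> pol - Jpol P r \<alpha> pol) \<le> \<delta>app" for k pol
  proof -
    define g where "g S = (SUP pol. supnorm (Mproj S Phi *v Jpol P r \<alpha> pol - Jpol P r \<alpha> pol))" for S
    have "supnorm (Mproj (D k) Phi *v Jpol P r \<alpha> pol - Jpol P r \<alpha> pol) \<le> g (D k)"
      unfolding g_def by (rule cSUP_upper) (auto intro: bdd_above_finite)
    also have "g (D k) \<le> \<delta>app"
      unfolding dapp g_def[symmetric] by (rule cSUP_upper) (auto intro: bdd_above_finite finr)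
    finally show ?thesis .
  qed
  have dapp0: "0 \<le> \<delta>app" using app_le[of 0 "mu 0"] supnorm_nonneg order_trans by blast
  have gd_le: "\<bar>1 - \<gamma> * l\<bar> \<le> \<alpha>GD" if "l \<in> eigenvalues (gram (D k) Phi)" for k l
  proof -
    have "\<bar>1 - \<gamma> * l\<bar> \<le> Max ((\<lambda>l. \<bar>1 - \<gamma> * l\<bar>) ` eigenvalues (gram (D k) Phi))"
      by (rule Max_ge) (use that eig_finite[OF symm_gram, of "D k" Phi] in auto)
    also have "\<dots> \<le> \<alpha>GD"
      unfolding aGD by (rule cSUP_upper) (auto intro: bdd_above_finite finr)
    finally show ?thesis .
  qed
  have aGD0: "0 \<le> \<alpha>GD"
  proof -
    obtain l where "l \<in> eigenvalues (gram (D 0) Phi)" using eig_nonempty[OF symm_gram] by blast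
    from gd_le[OF this] show ?thesis by linarith
  qed
  have sig: "sigma_min Phi > 0" using sigma_bound[OF rank[of 0]] by blast
  have c0: "0 \<le> c" unfolding c_def using sig by (simp add: matnorm_nonneg)
  define n where "n = m + H - 1"
  have npow: "\<alpha>^m * \<alpha>^(H - 1) = \<alpha>^n" unfolding n_def using H by (simp add: power_add[symmetric])
  define A where "A = \<alpha>^n * \<delta>FV"
  define Cc where "Cc = c * \<alpha>GD ^ \<eta>"
  have A0: "0 \<le> A" unfolding A_def using a0 dFV0 by simp
  have Cc0: "0 \<le> Cc" unfolding Cc_def using c0 aGD0 by simp
  have hA: "A < 1/2"
  proof (cases "\<delta>FV = 0")
    case True then show ?thesis by (simp add: A_def)
  next
    case False
    then have dp: "\<delta>FV > 0" using dFV0 by simp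
    have l1: "ln (1 / \<alpha>) > 0" using a0 a1 by simp
    have "ln (2 * \<delta>FV) < real n * ln (1 / \<alpha>)" using mH l1 unfolding n_def by (simp add: pos_divide_less_eq)
    also have "\<dots> = ln ((1 / \<alpha>) ^ n)" using a0 by (simp add: ln_realpow)
    finally have "2 * \<delta>FV < (1 / \<alpha>) ^ n" using dp a0 by (simp add: ln_less_cancel_iff)
    then have "2 * \<delta>FV < 1 / \<alpha> ^ n" by (simp add: power_one_over)
    then have "2 * \<delta>FV * \<alpha>^n < 1" using a0 by (simp add: less_divide_eq)
    then show ?thesis unfolding A_def by (simp add: algebra_simps)
  qed
  have hC: "Cc < 1/3"
  proof (cases "\<alpha>GD = 0 \<or> c = 0")
    case True then show ?thesis using eta by (auto simp: Cc_def power_0_left)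
  next
    case False
    then have gp: "\<alpha>GD > 0" and cp: "c > 0" using aGD0 c0 by auto
    have l1: "ln (1 / \<alpha>GD) > 0" using gp aGD1 by simp
    have e3: "3 * sqrt (real CARD('s)) * matnorm_inf Phi / sigma_min Phi = 3 * c" unfolding c_def by simp
    have "ln (3 * c) < real \<eta> * ln (1 / \<alpha>GD)" using eta_big l1 unfolding e3 by (simp add: pos_divide_less_eq)
    also have "\<dots> = ln ((1 / \<alpha>GD) ^ \<eta>)" using gp by (simp add: ln_realpow)
    finally have "3 * c < (1 / \<alpha>GD) ^ \<eta>" using cp gp by (simp add: ln_less_cancel_iff)
    then have "3 * c < 1 / \<alpha>GD ^ \<eta>" by (simp add: power_one_over)
    then have "3 * c * \<alpha>GD ^ \<eta> < 1" using gp by (simp add: less_divide_eq)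
    then show ?thesis unfolding Cc_def by simp
  qed
  have beta_eq: "\<beta> = Cc + (1 + Cc) * (\<delta>FV * \<alpha>^n)"
    unfolding beta_def Cc_def n_def by (simp add: algebra_simps)
  have beta1: "\<beta> < 1"
  proof -
    have "Cc * (A + 1) \<le> Cc * (3/2)" using hA Cc0 by (intro mult_left_mono) simp_all
    moreover have "\<beta> = A + Cc * (A + 1)" unfolding beta_eq A_def by (simp add: algebra_simps)
    ultimately show ?thesis using hA hC by linarith
  qed
  have beta0: "0 \<le> \<beta>" unfolding beta_eq using Cc0 dFV0 a0 by simp
  have tau_eq: "\<tau> = (1 + Cc) * (\<delta>FV * \<alpha>^m * K + \<delta>FV * \<alpha>^n * K + \<delta>app + \<delta>FV * \<epsilon>PE) + Cc * K"
    unfolding tau_def Cc_def K_def n_def by (simp add: algebra_simps add_divide_distrib)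
  have tau0: "0 \<le> \<tau>" unfolding tau_eq using Cc0 dFV0 a0 K0 dapp0 eps by simp
  have erec: "e (Suc k) \<le> \<beta> * e k + \<tau>" for k
  proof -
    define mu' where "mu' = mu (Suc k)"
    define Y where "Y = (Tbell P r \<alpha> ^^ (H - 1)) (J k)"
    define Jh where "Jh = (Tpol P r \<alpha> mu' ^^ m) Y + w (Suc k)"
    define M where "M = Mproj (D k) Phi"
    define V' where "V' = V (Suc k)"
    have th: "\<theta> (Suc k) = (gd_step \<gamma> (D k) Phi Jh ^^ \<eta>) (\<theta> k)"
      using theta_step[of k] unfolding Tdef Tmdef Jh_def Y_def mu'_def .
    have g1: "supnorm (J (Suc k) - M *v Jh) \<le> Cc * supnorm (J k - M *v Jh)"
      using gd_error[where Jh=Jh and n=\<eta> and t="\<theta> k", OF rank[of k] gamma gd_le[of _ k]]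
      unfolding J_def th M_def Cc_def c_def by simp
    define X where "X = supnorm (M *v Jh - V')"
    have boxV: "\<forall>s. 0 \<le> V j $ s \<and> V j $ s \<le> K" for j using Jpol_box unfolding V_def K_def by blast
    have g2: "supnorm (J k - M *v Jh) \<le> e k + K + X"
    proof -
      have "supnorm (J k - M *v Jh) \<le> supnorm (J k - V k) + supnorm ((V k - V') + (V' - M *v Jh))"
        using supnorm_triangle[of "J k - V k" "(V k - V') + (V' - M *v Jh)"] by simp
      moreover have "supnorm ((V k - V') + (V' - M *v Jh)) \<le> supnorm (V k - V') + supnorm (V' - M *v Jh)"
        by (rule supnorm_triangle)
      moreover have "supnorm (V k - V') \<le> K" unfolding V'_def by (rule box_diff[OF boxV boxV])
      moreover have "supnorm (V' - M *v Jh) = X" unfolding X_def by (rule supnorm_commute)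
      ultimately show ?thesis unfolding e_def by linarith
    qed
    have Mb: "supnorm (M *v z) \<le> \<delta>FV * supnorm z" for z
      using matnorm_bound[of M z] mult_right_mono[OF fv_le[of k] supnorm_nonneg[of z]] unfolding M_def by linarith
    have g3: "X \<le> \<delta>FV * (\<alpha>^m * (\<alpha>^(H - 1) * e k + K)) + \<delta>app + \<delta>FV * \<epsilon>PE"
    proof -
      have fixV: "(Tpol P r \<alpha> mu' ^^ m) V' = V'" unfolding V'_def V_def mu'_def by (rule Jpol_fix_iter)
      have ident: "M *v Jh - V' = M *v ((Tpol P r \<alpha> mu' ^^ m) Y - (Tpol P r \<alpha> mu' ^^ m) V') + (M *v V' - V') + M *v w (Suc k)"
        unfolding Jh_def fixV by (simp add: matrix_vector_right_distrib matrix_vector_mult_diff_distrib)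
      have shp: "\<And>J V c. (\<forall>s. J$s \<le> V$s + c) \<Longrightarrow> (\<forall>s. Tpol P r \<alpha> mu' J $ s \<le> Tpol P r \<alpha> mu' V $ s + \<alpha> * c)"
        by (rule Tpol_shift)
      have shb: "\<And>J V c. (\<forall>s. J$s \<le> V$s + c) \<Longrightarrow> (\<forall>s. Tbell P r \<alpha> J $ s \<le> Tbell P r \<alpha> V $ s + \<alpha> * c)"
        by (rule Tbell_shift)
      have a0le: "0 \<le> \<alpha>" using a0 by linarith
      have p1: "supnorm ((Tpol P r \<alpha> mu' ^^ m) Y - (Tpol P r \<alpha> mu' ^^ m) V') \<le> \<alpha>^m * supnorm (Y - V')"
        using iter_contr[OF shp a0le, where n=m and J=Y and V=V'] .
      have p2: "supnorm (Y - (Tbell P r \<alpha> ^^ (H - 1)) (V k)) \<le> \<alpha>^(H - 1) * e k"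
        unfolding Y_def e_def using iter_contr[OF shb a0le, where n="H - 1" and J="J k" and V="V k"] .
      have bT: "\<forall>s. 0 \<le> (Tbell P r \<alpha> ^^ (H - 1)) (V k) $ s \<and> (Tbell P r \<alpha> ^^ (H - 1)) (V k) $ s \<le> K"
        using Tbell_iter_box[of "V k" "H - 1"] boxV[of k] unfolding K_def by blast
      have p3: "supnorm ((Tbell P r \<alpha> ^^ (H - 1)) (V k) - V') \<le> K"
        unfolding V'_def by (rule box_diff[OF bT boxV])
      have "supnorm (Y - V') \<le> supnorm (Y - (Tbell P r \<alpha> ^^ (H - 1)) (V k)) + supnorm ((Tbell P r \<alpha> ^^ (H - 1)) (V k) - V')"
        using supnorm_triangle[of "Y - (Tbell P r \<alpha> ^^ (H - 1)) (V k)" "(Tbell P r \<alpha> ^^ (H - 1)) (V k) - V'"] by simp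
      then have p4: "supnorm (Y - V') \<le> \<alpha>^(H - 1) * e k + K" using p2 p3 by linarith
      have p5: "supnorm (M *v ((Tpol P r \<alpha> mu' ^^ m) Y - (Tpol P r \<alpha> mu' ^^ m) V')) \<le> \<delta>FV * (\<alpha>^m * (\<alpha>^(H - 1) * e k + K))"
      proof -
        have "\<alpha>^m * supnorm (Y - V') \<le> \<alpha>^m * (\<alpha>^(H - 1) * e k + K)" using p4 a0 by (simp add: mult_left_mono)
        then have "supnorm ((Tpol P r \<alpha> mu' ^^ m) Y - (Tpol P r \<alpha> mu' ^^ m) V') \<le> \<alpha>^m * (\<alpha>^(H - 1) * e k + K)"
          using p1 by linarith
        then show ?thesis using Mb dFV0 by (meson mult_left_mono order_trans)
      qed
      have p6: "supnorm (M *v V' - V') \<le> \<delta>app" unfolding M_def V'_def V_def by (rule app_le)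
      have p7: "supnorm (M *v w (Suc k)) \<le> \<delta>FV * \<epsilon>PE"
        using Mb[of "w (Suc k)"] w_bound[of k] dFV0 by (meson mult_left_mono order_trans)
      have "X \<le> supnorm (M *v ((Tpol P r \<alpha> mu' ^^ m) Y - (Tpol P r \<alpha> mu' ^^ m) V')) + supnorm (M *v V' - V') + supnorm (M *v w (Suc k))"
        unfolding X_def ident
        using supnorm_triangle[of "M *v ((Tpol P r \<alpha> mu' ^^ m) Y - (Tpol P r \<alpha> mu' ^^ m) V') + (M *v V' - V')" "M *v w (Suc k)"]
          supnorm_triangle[of "M *v ((Tpol P r \<alpha> mu' ^^ m) Y - (Tpol P r \<alpha> mu' ^^ m) V')" "M *v V' - V'"] by linarith
      then show ?thesis using p5 p6 p7 by linarith
    qed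
    have g3': "X \<le> \<delta>FV * \<alpha>^n * e k + \<delta>FV * \<alpha>^m * K + \<delta>app + \<delta>FV * \<epsilon>PE"
    proof -
      have "\<delta>FV * (\<alpha>^m * (\<alpha>^(H - 1) * e k + K)) = \<delta>FV * (\<alpha>^m * \<alpha>^(H - 1)) * e k + \<delta>FV * \<alpha>^m * K"
        by (simp add: algebra_simps)
      then show ?thesis using g3 unfolding npow by linarith
    qed
    have "e (Suc k) \<le> supnorm (J (Suc k) - M *v Jh) + X"
    proof -
      show ?thesis unfolding e_def X_def V'_def
        using supnorm_triangle[of "J (Suc k) - M *v Jh" "M *v Jh - V (Suc k)"] by simp
    qed
    also have "\<dots> \<le> Cc * (e k + K + X) + X"
      using g1 mult_left_mono[OF g2 Cc0] by linarith
    also have "\<dots> = Cc * e k + Cc * K + (1 + Cc) * X" by (simp add: algebra_simps)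
    also have "\<dots> \<le> Cc * e k + Cc * K + (1 + Cc) * (\<delta>FV * \<alpha>^n * e k + \<delta>FV * \<alpha>^m * K + \<delta>app + \<delta>FV * \<epsilon>PE)"
      using mult_left_mono[OF g3', of "1 + Cc"] Cc0 by simp
    also have "\<dots> \<le> \<beta> * e k + \<tau>"
    proof -
      have "\<beta> * e k + \<tau> = Cc * e k + Cc * K + (1 + Cc) * (\<delta>FV * \<alpha>^n * e k + \<delta>FV * \<alpha>^m * K + \<delta>app + \<delta>FV * \<epsilon>PE)
          + (1 + Cc) * (\<delta>FV * \<alpha>^n * K)"
        unfolding beta_eq tau_eq by (simp add: algebra_simps)
      moreover have "0 \<le> (1 + Cc) * (\<delta>FV * \<alpha>^n * K)" using Cc0 dFV0 a0 K0 by simp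
      ultimately show ?thesis by linarith
    qed
    finally show ?thesis .
  qed
  have arec: "av (Suc k) \<le> \<alpha>^H * av k + (\<epsilon>LA + 2 * \<alpha>^H * e k) / (1 - \<alpha>)" for k
    unfolding av_def e_def V_def
    by (rule improve[OF H]) (use greedy[of k] in \<open>simp add: Tdef Tmdef\<close>)
  have av0: "av 0 \<le> 1 / (1 - \<alpha>)"
    unfolding av_def V_def K_def[symmetric]
    by (rule box_diff) (use Jpol_box Jstar_box in \<open>auto simp: K_def\<close>)
  have enn: "0 \<le> e k" for k unfolding e_def by (rule supnorm_nonneg)
  have q0: "0 \<le> \<alpha>^H" using a0 by simp
  have q1: "\<alpha>^H < 1" using a0 a1 H by (simp add: power_less_one_iff)
  have U: "av k \<le> (\<alpha>^H) ^ k / (1 - \<alpha>) + 2 * \<alpha>^H * e 0 / (1 - \<alpha>) * real k * (max (\<alpha>^H) \<beta>) ^ (k - 1)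
      + (2 * \<alpha>^H * (\<tau> / (1 - \<beta>)) + \<epsilon>LA) / ((1 - \<alpha>^H) * (1 - \<alpha>))" for k
    by (rule unroll[OF q0 q1 beta0 beta1 a1 tau0 eps(1) enn arec erec av0])
  show ?thesis
  proof (intro conjI allI impI beta1)
    fix k :: nat assume "k \<ge> 1"
    have "\<alpha> ^ (k * H) = (\<alpha>^H) ^ k" by (simp add: power_mult[symmetric] mult.commute)
    moreover have "e 0 = supnorm (Jpol P r \<alpha> (mu 0) - J 0)" unfolding e_def V_def by (rule supnorm_commute)
    moreover have "av k = supnorm (Jpol P r \<alpha> (mu k) - Jstar P r \<alpha>)" unfolding av_def V_def ..
    ultimately show "supnorm (Jpol P r \<alpha> (mu k) - Jstar P r \<alpha>)
       \<le> \<alpha> ^ (k * H) / (1 - \<alpha>)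
         + 2 * \<alpha> ^ H * supnorm (Jpol P r \<alpha> (mu 0) - J 0) / (1 - \<alpha>) * real k * (max (\<alpha> ^ H) \<beta>) ^ (k - 1)
         + (2 * \<alpha> ^ H * (\<tau> / (1 - \<beta>)) + \<epsilon>LA) / ((1 - \<alpha> ^ H) * (1 - \<alpha>))"
      using U[of k] by simp
  qed
qed


end
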